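(* Let $k$ be a positive integer and let $(C,F)$ be a finite simple undirected graph with $|C|=k$, equipped with edge weights $w:F\to\mathbb{R}$. Suppose that: (C1) $(C,F)$ is connected; (C2) for every partition of $C$ into two disjoint sets $S,T$ (a cut), the cut weight $w(S,T)=\sum_{\{i,j\}\in F,\ i\in S,\ j\in T} w_{ij}$ is non-negative; (C3) for all distinct $i,j,k\in C$, if $\{i,j\}\in F$, $\{j,k\}\in F$ and $\{i,k\}\notin F$, then $w_{ij}+w_{jk}<0$. Then $(C,F)$ is complete, i.e. $\{i,j\}\in F$ for all distinct $i,j\in C$.
   Context: $w_{ij}$ denotes $w(\{i,j\})$ for an edge $\{i,j\}\in F$. *)

theory Defs
  imports Complex_Main
begin

definition simple_graph :: "'a set \<Rightarrow> 'a set set \<Rightarrow> bool" where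
  "simple_graph C F \<longleftrightarrow> finite C \<and> (\<forall>e\<in>F. \<exists>i j. e = {i, j} \<and> i \<noteq> j \<and> i \<in> C \<and> j \<in> C)"

definition adj :: "'a set set \<Rightarrow> 'a \<Rightarrow> 'a \<Rightarrow> bool" where
  "adj F i j \<longleftrightarrow> {i, j} \<in> F"

definition graph_connected :: "'a set \<Rightarrow> 'a set set \<Rightarrow> bool" where
  "graph_connected C F \<longleftrightarrow> (\<forall>i\<in>C. \<forall>j\<in>C. (adj F)\<^sup>*\<^sup>* i j)"

definition cut_weight :: "'a set set \<Rightarrow> ('a set \<Rightarrow> real) \<Rightarrow> 'a set \<Rightarrow> 'a set \<Rightarrow> real" where
  "cut_weight F w S T = (\<Sum>e\<in>{e\<in>F. \<exists>i j. e = {i, j} \<and> i \<in> S \<and> j \<in> T}. w e)"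

definition complete_graph :: "'a set \<Rightarrow> 'a set set \<Rightarrow> bool" where
  "complete_graph C F \<longleftrightarrow> (\<forall>i\<in>C. \<forall>j\<in>C. i \<noteq> j \<longrightarrow> {i, j} \<in> F)"

end

theory Submission
  imports Defs
begin

theorem proposition1:
  fixes C :: "'a set" and F :: "'a set set" and w :: "'a set \<Rightarrow> real" and k :: nat
  assumes "k > 0"
    and "simple_graph C F"
    and "card C = k"
    and C1: "graph_connected C F"
    and C2: "\<And>S T. S \<inter> T = {} \<Longrightarrow> S \<union> T = C \<Longrightarrow> cut_weight F w S T \<ge> 0"
    and C3: "\<And>i j l. i \<in> C \<Longrightarrow> j \<in> C \<Longrightarrow> l \<in> C \<Longrightarrow> i \<noteq> j \<Longrightarrow> j \<noteq> l \<Longrightarrow> i \<noteq> l \<Longrightarrow>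
               {i, j} \<in> F \<Longrightarrow> {j, l} \<in> F \<Longrightarrow> {i, l} \<notin> F \<Longrightarrow> w {i, j} + w {j, l} < 0"
  shows "complete_graph C F"
proof (rule ccontr)
  assume nc: "\<not> complete_graph C F"
  have finC: "finite C" using assms(2) by (simp add: simple_graph_def)
  have edge: "\<And>e. e \<in> F \<Longrightarrow> \<exists>i j. e = {i,j} \<and> i\<noteq>j \<and> i\<in>C \<and> j\<in>C"
    using assms(2) by (auto simp: simple_graph_def)
  have edgeD: "a \<noteq> b \<and> a \<in> C \<and> b \<in> C" if ab: "{a,b} \<in> F" for a b
  proof -
    obtain i j where "{a,b} = {i,j}" "i\<noteq>j" "i\<in>C" "j\<in>C" using edge[OF ab] by blast
    then show ?thesis by (auto simp: doubleton_eq_iff)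
  qed
  have FP: "F \<subseteq> Pow C" using edge by blast
  have finF: "finite F" using finite_subset[OF FP] finC by blast
  define Tr where "Tr = {(i,j,l). i\<in>C \<and> j\<in>C \<and> l\<in>C \<and> {i,j}\<in>F \<and> {j,l}\<in>F \<and> {i,l}\<notin>F \<and> i\<noteq>l}"
  define N where "N v = {u\<in>C. u = v \<or> {u,v}\<in>F}" for v
  define X where "X v = {e\<in>F. \<exists>i j. e={i,j} \<and> i\<in>N v \<and> j\<in>C - N v}" for v
  have finTr: "finite Tr"
    by (rule finite_subset[of _ "C \<times> C \<times> C"]) (auto simp: Tr_def finC)
  have TrNE: "Tr \<noteq> {}"
  proof
    assume E: "Tr = {}"
    have trans: "{a,c} \<in> F" if "{a,b} \<in> F" "{b,c} \<in> F" "a \<noteq> c" for a b c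
    proof (rule ccontr)
      assume "{a,c} \<notin> F"
      then have "(a,b,c) \<in> Tr" using that edgeD unfolding Tr_def by auto
      then show False using E by auto
    qed
    obtain i j where ij: "i \<in> C" "j \<in> C" "i \<noteq> j" "{i,j} \<notin> F"
      using nc by (auto simp: complete_graph_def)
    have "(adj F)\<^sup>*\<^sup>* i j" using C1 ij by (auto simp: graph_connected_def)
    then have "i = j \<or> {i,j} \<in> F"
    proof (induction rule: rtranclp_induct)
      case base
      then show ?case by simp
    next
      case (step y z)
      have yz: "{y,z} \<in> F" using step.hyps(2) by (simp add: adj_def)
      show ?case
      proof (cases "i = y")
        case True
        then show ?thesis using yz by simp
      next
        case False
        then have "{i,y} \<in> F" using step.IH by simp
        then show ?thesis using trans[of i y z] yz by blast
      qed
    qed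
    then show False using ij by simp
  qed
  have Xfin: "finite (X v)" for v using finF by (simp add: X_def)
  have nonneg: "0 \<le> sum w (X v)" for v
  proof -
    have "N v \<inter> (C - N v) = {}" "N v \<union> (C - N v) = C" by (auto simp: N_def)
    from C2[OF this] show ?thesis by (simp add: cut_weight_def X_def)
  qed
  have S1: "(\<Sum>v\<in>C. sum w (X v)) = (\<Sum>(v,e)\<in>Sigma C X. w e)"
    using sum.Sigma[OF finC, of X "\<lambda>v e. w e"] Xfin by simp
  define g where "g = (\<lambda>(i::'a,j::'a,l::'a). (l, {i,j}))"
  have inj: "inj_on g Tr"
  proof (rule inj_onI)
    fix s t assume s: "s \<in> Tr" and t: "t \<in> Tr" and eq: "g s = g t"
    obtain i j l where sij: "s = (i,j,l)" by (cases s) auto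
    obtain i' j' l' where tij: "t = (i',j',l')" by (cases t) auto
    have l: "l = l'" and e: "{i,j} = {i',j'}" using eq by (auto simp: g_def sij tij)
    show "s = t"
    proof (cases "i = i' \<and> j = j'")
      case True then show ?thesis using l sij tij by simp
    next
      case False
      then have "i = j'" "j = i'" using e by (auto simp: doubleton_eq_iff)
      then show ?thesis using s t sij tij l by (auto simp: Tr_def insert_commute)
    qed
  qed
  have img: "g ` Tr = Sigma C X"
  proof
    show "g ` Tr \<subseteq> Sigma C X"
    proof
      fix x assume "x \<in> g ` Tr"
      then obtain i j l where t: "(i,j,l) \<in> Tr" and x: "x = (l, {i,j})" by (auto simp: g_def)
      have "j \<in> N l" "i \<in> C - N l" "{i,j} = {j,i}" using t by (auto simp: Tr_def N_def insert_commute)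
      then have "{i,j} \<in> X l" using t unfolding X_def Tr_def by blast
      then show "x \<in> Sigma C X" using t x by (auto simp: Tr_def)
    qed
  next
    show "Sigma C X \<subseteq> g ` Tr"
    proof
      fix x assume "x \<in> Sigma C X"
      then obtain v e where x: "x = (v,e)" and v: "v \<in> C" and e: "e \<in> X v" by auto
      then obtain a b where eab: "e = {a,b}" "a \<in> N v" "b \<in> C - N v" "e \<in> F" by (auto simp: X_def)
      have av: "a \<noteq> v"
      proof
        assume "a = v"
        then have "{b,v} \<in> F" using eab by (simp add: insert_commute)
        then show False using eab(3) by (auto simp: N_def)
      qed
      then have "{a,v} \<in> F" "a \<in> C" using eab(2) by (auto simp: N_def)
      moreover have "{b,v} \<notin> F" "b \<noteq> v" "b \<in> C" using eab(3) by (auto simp: N_def)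
      moreover have "{b,a} \<in> F" using eab by (simp add: insert_commute)
      ultimately have "(b,a,v) \<in> Tr" using v by (auto simp: Tr_def)
      moreover have "g (b,a,v) = x" using x eab by (simp add: g_def insert_commute)
      ultimately show "x \<in> g ` Tr" by force
    qed
  qed
  have S2: "(\<Sum>(v,e)\<in>Sigma C X. w e) = (\<Sum>(i,j,l)\<in>Tr. w {i,j})"
  proof -
    have "(\<Sum>(v,e)\<in>Sigma C X. w e) = (\<Sum>(v,e)\<in>g ` Tr. w e)" using img by simp
    also have "\<dots> = sum ((\<lambda>(v,e). w e) \<circ> g) Tr" by (rule sum.reindex[OF inj])
    also have "\<dots> = (\<Sum>(i,j,l)\<in>Tr. w {i,j})"
      by (rule sum.cong) (auto simp: g_def)
    finally show ?thesis .
  qed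
  define h where "h = (\<lambda>(i::'a,j::'a,l::'a). (l,j,i))"
  have injh: "inj_on h Tr" by (rule inj_onI) (auto simp: h_def)
  have imgh: "h ` Tr = Tr"
  proof
    show "h ` Tr \<subseteq> Tr" by (auto simp: h_def Tr_def insert_commute)
    show "Tr \<subseteq> h ` Tr"
    proof
      fix t assume t: "t \<in> Tr"
      obtain i j l where tt: "t = (i,j,l)" by (cases t) auto
      have "(l,j,i) \<in> Tr" using t tt by (auto simp: Tr_def insert_commute)
      moreover have "h (l,j,i) = t" using tt by (simp add: h_def)
      ultimately show "t \<in> h ` Tr" by force
    qed
  qed
  have S3: "(\<Sum>(i,j,l)\<in>Tr. w {i,j}) = (\<Sum>(i,j,l)\<in>Tr. w {j,l})"
  proof -
    have "(\<Sum>(i,j,l)\<in>Tr. w {i,j}) = (\<Sum>(i,j,l)\<in>h ` Tr. w {i,j})" using imgh by simp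
    also have "\<dots> = sum ((\<lambda>(i,j,l). w {i,j}) \<circ> h) Tr" by (rule sum.reindex[OF injh])
    also have "\<dots> = (\<Sum>(i,j,l)\<in>Tr. w {j,l})"
      by (rule sum.cong) (auto simp: h_def insert_commute)
    finally show ?thesis .
  qed
  have neg: "(\<Sum>(i,j,l)\<in>Tr. w {i,j} + w {j,l}) < (\<Sum>(i,j,l)\<in>Tr. 0)"
  proof (rule sum_strict_mono[OF finTr TrNE])
    fix t assume t: "t \<in> Tr"
    obtain i j l where tt: "t = (i,j,l)" by (cases t) auto
    have "i \<noteq> j" "j \<noteq> l" using t tt edgeD by (auto simp: Tr_def)
    then have "w {i,j} + w {j,l} < 0" using t tt C3 by (auto simp: Tr_def)
    then show "(case t of (i,j,l) \<Rightarrow> w {i,j} + w {j,l}) < (case t of (i,j,l) \<Rightarrow> 0)"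
      using tt by simp
  qed
  have "(\<Sum>(i,j,l)\<in>Tr. w {i,j} + w {j,l}) = (\<Sum>(i,j,l)\<in>Tr. w {i,j}) + (\<Sum>(i,j,l)\<in>Tr. w {j,l})"
    by (simp add: sum.distrib[symmetric] case_prod_beta)
  then have "2 * (\<Sum>(i,j,l)\<in>Tr. w {i,j}) < 0" using neg S3 by simp
  moreover have "0 \<le> (\<Sum>v\<in>C. sum w (X v))" by (rule sum_nonneg) (use nonneg in auto)
  ultimately show False using S1 S2 by simp
qed

end
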